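(* Suppose no agent is faulty, the directed graph $G$ on $\{1,\dots,n\}$ is strongly connected, and every agent runs Failure-free BFL. Let $\lambda=\big(1-(1/n)^n\big)^{1/n}$, let $\theta\neq\theta^*$, and let $\psi_t^i(\theta,\theta^* )=\log\frac{\mu_t^i(\theta)}{\mu_t^i(\theta^* )}$. Then for each agent $i$ and each $t\ge1$, $$\mathbb{E}^*\big[\psi_t^i(\theta,\theta^* )\big]\le\frac{nC_0}{(1-\frac{1}{n^n})(1-\lambda)}\,t-\frac{C_1}{2n^n}\,t^2 .$$
   Context: Finite hypothesis set $\Theta=\{\theta_1,\dots,\theta_m\}$, true state $\theta^*$. Agent $i$ has finite signal space $\mathcal{S}_i$ and likelihoods $\ell_i(\cdot\mid\theta)$ with full support; in iteration $t$ it observes $s_t^i\sim\ell_i(\cdot\mid\theta^* )$, independently across agents and iterations; $\ell_i(s_{1,t}^i\mid\theta)=\prod_{r=1}^t\ell_i(s_r^i\mid\theta)$. $\mathbb{E}^*$ denotes expectation when signals are drawn under $\theta^*$. $\mathcal{I}_i$ is the set of incoming neighbors of $i$. Failure-free BFL: $\mu_0^i$ uniform on $\Theta$; in iteration $t$, agent $i$ receives $\mu_{t-1}^j$ from all $j\in\mathcal{I}_i$ and sets $\mu_t^i(\theta)\propto\ell_i(s_{1,t}^i\mid\theta)\prod_{j\in\mathcal{I}_i\cup\{i\}}\mu_{t-1}^j(\theta)^{1/(|\mathcal{I}_i|+1)}$, normalized over $\Theta$. Constants: $-C_0=\min_{i}\min_{\theta_1\ne\theta_2\in\Theta}\min_{w\in\mathcal{S}_i}\log\frac{\ell_i(w\mid\theta_1)}{\ell_i(w\mid\theta_2)}$,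 and $C_1=\min_{\theta,\theta'\in\Theta,\ \theta\neq\theta'}\sum_{i=1}^nD(\ell_i(\cdot\mid\theta')\|\ell_i(\cdot\mid\theta))$, where $D$ is the Kullback–Leibler divergence $D(p\|q)=\sum_wp(w)\log\frac{p(w)}{q(w)}$. *)

theory Defs
  imports Complex_Main "HOL-Library.FuncSet"
begin

text \<open>Agents are 1..n. A signal history is a function assigning to (agent i, iteration r)
the signal observed by agent i in iteration r.\<close>

definition agents :: "nat \<Rightarrow> nat set" where
  "agents n = {1..n}"

text \<open>Incoming neighbours of agent i in the digraph with edge set E (edge (j,i): j \<rightarrow> i).\<close>
definition incoming :: "nat \<Rightarrow> (nat \<times> nat) set \<Rightarrow> nat \<Rightarrow> nat set" where
  "incoming n E i = {j \<in> agents n. (j, i) \<in> E \<and> j \<noteq> i}"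

definition strongly_connected :: "nat \<Rightarrow> (nat \<times> nat) set \<Rightarrow> bool" where
  "strongly_connected n E \<longleftrightarrow> (\<forall>i\<in>agents n. \<forall>j\<in>agents n. (i, j) \<in> E\<^sup>*)"

definition cum_lik ::
  "(nat \<Rightarrow> 's \<Rightarrow> 'h \<Rightarrow> real) \<Rightarrow> (nat \<times> nat \<Rightarrow> 's) \<Rightarrow> nat \<Rightarrow> nat \<Rightarrow> 'h \<Rightarrow> real" where
  "cum_lik L \<omega> t i \<theta> = (\<Prod>r\<in>{1..t}. L i (\<omega> (i, r)) \<theta>)"

primrec bfl_belief ::
  "nat \<Rightarrow> (nat \<times> nat) set \<Rightarrow> 'h set \<Rightarrow> (nat \<Rightarrow> 's \<Rightarrow> 'h \<Rightarrow> real) \<Rightarrow> (nat \<times> nat \<Rightarrow> 's)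
    \<Rightarrow> nat \<Rightarrow> nat \<Rightarrow> 'h \<Rightarrow> real" where
  "bfl_belief n E \<Theta> L \<omega> 0 = (\<lambda>i \<theta>. 1 / real (card \<Theta>))"
| "bfl_belief n E \<Theta> L \<omega> (Suc t) =
     (let b = bfl_belief n E \<Theta> L \<omega> t;
          u = (\<lambda>i \<theta>. cum_lik L \<omega> (Suc t) i \<theta> *
                 (\<Prod>j\<in>insert i (incoming n E i).
                     b j \<theta> powr (1 / (real (card (incoming n E i)) + 1))))
      in (\<lambda>i \<theta>. u i \<theta> / (\<Sum>\<theta>'\<in>\<Theta>. u i \<theta>')))"

text \<open>Expectation under theta*: signals independent across agents and iterations 1..t,
  s^i_r ~ l_i(. | theta*). X depends on the signals of iterations 1..t only.\<close>
definition expect_star ::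
  "nat \<Rightarrow> (nat \<Rightarrow> 's set) \<Rightarrow> (nat \<Rightarrow> 's \<Rightarrow> 'h \<Rightarrow> real) \<Rightarrow> 'h \<Rightarrow> nat
    \<Rightarrow> ((nat \<times> nat \<Rightarrow> 's) \<Rightarrow> real) \<Rightarrow> real" where
  "expect_star n S L \<theta>s t X =
     (\<Sum>\<omega>\<in>PiE (agents n \<times> {1..t}) (\<lambda>p. S (fst p)).
        (\<Prod>p\<in>agents n \<times> {1..t}. L (fst p) (\<omega> p) \<theta>s) * X \<omega>)"

definition C0 :: "nat \<Rightarrow> (nat \<Rightarrow> 's set) \<Rightarrow> (nat \<Rightarrow> 's \<Rightarrow> 'h \<Rightarrow> real) \<Rightarrow> 'h set \<Rightarrow> real" where
  "C0 n S L \<Theta> = - Min {ln (L i w \<theta>1 / L i w \<theta>2) | i w \<theta>1 \<theta>2.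
       i \<in> agents n \<and> \<theta>1 \<in> \<Theta> \<and> \<theta>2 \<in> \<Theta> \<and> \<theta>1 \<noteq> \<theta>2 \<and> w \<in> S i}"

definition KL :: "'s set \<Rightarrow> ('s \<Rightarrow> real) \<Rightarrow> ('s \<Rightarrow> real) \<Rightarrow> real" where
  "KL A p q = (\<Sum>w\<in>A. p w * ln (p w / q w))"

definition C1 :: "nat \<Rightarrow> (nat \<Rightarrow> 's set) \<Rightarrow> (nat \<Rightarrow> 's \<Rightarrow> 'h \<Rightarrow> real) \<Rightarrow> 'h set \<Rightarrow> real" where
  "C1 n S L \<Theta> = Min {(\<Sum>i\<in>agents n. KL (S i) (\<lambda>w. L i w \<theta>') (\<lambda>w. L i w \<theta>)) | \<theta> \<theta>'.
       \<theta> \<in> \<Theta> \<and> \<theta>' \<in> \<Theta> \<and> \<theta> \<noteq> \<theta>'}"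

end

theory Submission
  imports Defs
begin


definition amat :: "nat \<Rightarrow> (nat \<times> nat) set \<Rightarrow> nat \<Rightarrow> nat \<Rightarrow> real" where
  "amat n E i l = (if l \<in> insert i (incoming n E i) then 1 / (real (card (incoming n E i)) + 1) else 0)"

primrec Pm :: "nat \<Rightarrow> (nat \<times> nat) set \<Rightarrow> nat \<Rightarrow> nat \<Rightarrow> nat \<Rightarrow> real" where
  "Pm n E 0 i j = (if i = j then 1 else 0)"
| "Pm n E (Suc k) i j = (\<Sum>l\<in>agents n. amat n E i l * Pm n E k l j)"

lemma incoming_sub: "incoming n E i \<subseteq> agents n - {i}"
  unfolding incoming_def by auto

lemma fin_agents[simp]: "finite (agents n)" by (simp add: agents_def)
lemma card_agents[simp]: "card (agents n) = n" by (simp add: agents_def)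

lemma fin_incoming[simp]: "finite (incoming n E i)"
  using incoming_sub[of n E i] by (meson finite_Diff fin_agents finite_subset)

lemma card_inc: assumes "i \<in> agents n" shows "real (card (incoming n E i)) + 1 \<le> real n"
proof -
  have "card (incoming n E i) \<le> card (agents n - {i})"
    using incoming_sub[of n E i] by (intro card_mono) auto
  also have "\<dots> = n - 1" using assms by simp
  finally show ?thesis using assms by (cases n) (auto simp: agents_def)
qed

lemma amat_nonneg: "amat n E i l \<ge> 0" by (simp add: amat_def)

lemma amat_ge: assumes "i \<in> agents n" "l \<in> insert i (incoming n E i)"
  shows "amat n E i l \<ge> 1 / real n"
proof -
  have "real (card (incoming n E i)) + 1 \<le> real n" by (rule card_inc[OF assms(1)])
  then show ?thesis using assms(2) unfolding amat_def
    by (simp add: frac_le)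
qed

lemma amat_row: assumes "i \<in> agents n" shows "(\<Sum>l\<in>agents n. amat n E i l) = 1"
proof -
  have sub: "insert i (incoming n E i) \<subseteq> agents n" using assms incoming_sub by auto
  have "(\<Sum>l\<in>agents n. amat n E i l) = (\<Sum>l\<in>agents n \<inter> insert i (incoming n E i). 1 / (real (card (incoming n E i)) + 1))"
    unfolding amat_def by (rule sum.inter_restrict[symmetric]) simp
  also have "agents n \<inter> insert i (incoming n E i) = insert i (incoming n E i)" using sub by auto
  also have "card (insert i (incoming n E i)) = card (incoming n E i) + 1"
    using incoming_sub by (auto simp: card_insert_if)
  ultimately show ?thesis by simp
qed

lemma Pm_nonneg: "Pm n E k i j \<ge> 0"
  by (induction k arbitrary: i) (auto intro!: sum_nonneg mult_nonneg_nonneg amat_nonneg)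

lemma Pm_walk:
  assumes n1: "n \<ge> 1" and Esub: "E \<subseteq> agents n \<times> agents n"
  shows "i \<in> agents n \<Longrightarrow> j \<in> agents n \<Longrightarrow> (j, i) \<in> E ^^ m \<Longrightarrow> m \<le> k \<Longrightarrow> Pm n E k i j \<ge> (1 / real n) ^ k"
proof (induction k arbitrary: i m)
  case 0
  then show ?case by auto
next
  case (Suc k)
  obtain l where l: "l \<in> insert i (incoming n E i)" "(j, l) \<in> E ^^ (m - 1)" "m - 1 \<le> k"
  proof (cases m)
    case 0
    then have "i = j" using Suc.prems by auto
    then show ?thesis using that[of i] 0 Suc.prems by auto
  next
    case (Suc m')
    then obtain l where "(j, l) \<in> E ^^ m'" "(l, i) \<in> E" using Suc.prems(3) by (auto elim: relpow_Suc_E)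
    moreover have "l \<in> agents n" using \<open>(l, i) \<in> E\<close> Esub by auto
    ultimately show ?thesis using that[of l] Suc Suc.prems(4) \<open>m = Suc m'\<close>
      by (auto simp: incoming_def)
  qed
  have la: "l \<in> agents n" using l(1) Suc.prems(1) incoming_sub by auto
  have "amat n E i l * Pm n E k l j \<le> (\<Sum>l\<in>agents n. amat n E i l * Pm n E k l j)"
    by (rule member_le_sum) (auto intro: la mult_nonneg_nonneg amat_nonneg Pm_nonneg)
  moreover have "(1 / real n) * (1 / real n) ^ k \<le> amat n E i l * Pm n E k l j"
    by (rule mult_mono) (auto intro: amat_ge[OF Suc.prems(1) l(1)] Suc.IH[OF la Suc.prems(2) l(2,3)] amat_nonneg)
  ultimately show ?case by simp
qed

lemma Pm_shift:
  assumes "\<And>l. l \<in> agents n \<Longrightarrow> Pm n E N l j \<ge> c"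
  shows "i \<in> agents n \<Longrightarrow> Pm n E (k + N) i j \<ge> c"
proof (induction k arbitrary: i)
  case 0 then show ?case using assms by simp
next
  case (Suc k)
  have "(\<Sum>l\<in>agents n. amat n E i l * c) \<le> (\<Sum>l\<in>agents n. amat n E i l * Pm n E (k + N) l j)"
    by (rule sum_mono) (auto intro: mult_left_mono Suc.IH amat_nonneg)
  moreover have "(\<Sum>l\<in>agents n. amat n E i l * c) = c"
    using amat_row[OF Suc.prems] by (simp add: sum_distrib_right[symmetric])
  ultimately show ?case by simp
qed

lemma short_path:
  assumes fin: "finite V" and RV: "R \<subseteq> V \<times> V"
  shows "(x, y) \<in> R ^^ m \<Longrightarrow> \<exists>m'\<le>card V. (x, y) \<in> R ^^ m'"
proof (induction m rule: less_induct)
  case (less m)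
  show ?case
  proof (cases "m \<le> card V")
    case True then show ?thesis using less.prems by blast
  next
    case False
    obtain f where f: "f 0 = x" "f m = y" "\<forall>i<m. (f i, f (Suc i)) \<in> R"
      using less.prems by (auto simp: relpow_fun_conv)
    have fV: "f ` {0..m} \<subseteq> V"
    proof
      fix z assume "z \<in> f ` {0..m}"
      then obtain k where k: "k \<le> m" "z = f k" by auto
      show "z \<in> V"
      proof (cases k)
        case 0
        have "(f 0, f (Suc 0)) \<in> R" using f(3) False by auto
        then show ?thesis using RV k 0 by auto
      next
        case (Suc k')
        have "(f k', f (Suc k')) \<in> R" using f(3) k Suc by auto
        then show ?thesis using RV k Suc by auto
      qed
    qed
    have "\<not> inj_on f {0..m}"
    proof
      assume "inj_on f {0..m}"
      then have "card {0..m} \<le> card V" using card_inj_on_le[OF _ fV fin] by blast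
      then show False using False by simp
    qed
    then obtain a b where ab: "a \<le> m" "b \<le> m" "a \<noteq> b" "f a = f b"
      unfolding inj_on_def by auto
    obtain a' b' where ab': "a' < b'" "b' \<le> m" "f a' = f b'"
      using ab by (metis linorder_neqE_nat)
    have p1: "(x, f a') \<in> R ^^ a'"
      unfolding relpow_fun_conv using f ab' by (intro exI[of _ f]) auto
    have p2: "(f b', y) \<in> R ^^ (m - b')"
      unfolding relpow_fun_conv using f ab'
      by (intro exI[of _ "\<lambda>k. f (k + b')"]) auto
    have "(x, y) \<in> R ^^ (a' + (m - b'))"
      using p1 p2 ab'(3) by (auto simp: relpow_add)
    moreover have "a' + (m - b') < m" using ab' by simp
    ultimately show ?thesis using less.IH by blast
  qed
qed



definition fvec :: "nat \<Rightarrow> (nat \<times> nat) set \<Rightarrow> (nat \<Rightarrow> real) \<Rightarrow> nat \<Rightarrow> nat \<Rightarrow> real" where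
  "fvec n E D k i = (\<Sum>m\<in>agents n. Pm n E k i m * D m)"

lemma fvec_0: "i \<in> agents n \<Longrightarrow> fvec n E D 0 i = D i"
proof -
  assume i: "i \<in> agents n"
  have "fvec n E D 0 i = (\<Sum>m\<in>agents n. if i = m then D m else 0)"
    unfolding fvec_def by (rule sum.cong) auto
  then show ?thesis using i by simp
qed

lemma fvec_Suc: "fvec n E D (Suc k) i = (\<Sum>l\<in>agents n. amat n E i l * fvec n E D k l)"
proof -
  have "fvec n E D (Suc k) i = (\<Sum>m\<in>agents n. \<Sum>l\<in>agents n. amat n E i l * Pm n E k l m * D m)"
    unfolding fvec_def by (simp add: sum_distrib_right)
  also have "\<dots> = (\<Sum>l\<in>agents n. \<Sum>m\<in>agents n. amat n E i l * Pm n E k l m * D m)"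
    by (rule sum.swap)
  also have "\<dots> = (\<Sum>l\<in>agents n. amat n E i l * fvec n E D k l)"
    unfolding fvec_def by (simp add: sum_distrib_left mult.assoc)
  finally show ?thesis .
qed

lemma closed_form:
  fixes e :: "nat \<Rightarrow> nat \<Rightarrow> real"
  assumes e0: "\<And>j. j \<in> agents n \<Longrightarrow> e 0 j = 0"
    and eS: "\<And>s j. Suc s \<le> t \<Longrightarrow> j \<in> agents n \<Longrightarrow>
              e (Suc s) j = - real (Suc s) * D j + (\<Sum>l\<in>agents n. amat n E j l * e s l)"
  shows "s \<le> t \<Longrightarrow> j \<in> agents n \<Longrightarrow> e s j = - (\<Sum>k<s. (real s - real k) * fvec n E D k j)"
proof (induction s arbitrary: j)
  case 0 then show ?case using e0 by simp
next
  case (Suc s)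
  have "e (Suc s) j = - real (Suc s) * D j + (\<Sum>l\<in>agents n. amat n E j l * - (\<Sum>k<s. (real s - real k) * fvec n E D k l))"
    using eS[OF Suc.prems] Suc.IH Suc.prems by simp
  also have "(\<Sum>l\<in>agents n. amat n E j l * - (\<Sum>k<s. (real s - real k) * fvec n E D k l))
     = - (\<Sum>k<s. (real s - real k) * fvec n E D (Suc k) j)"
  proof -
    have "(\<Sum>l\<in>agents n. amat n E j l * - (\<Sum>k<s. (real s - real k) * fvec n E D k l))
      = - (\<Sum>l\<in>agents n. \<Sum>k<s. (real s - real k) * (amat n E j l * fvec n E D k l))"
      by (simp add: sum_distrib_left sum_negf mult.left_commute)
    also have "\<dots> = - (\<Sum>k<s. \<Sum>l\<in>agents n. (real s - real k) * (amat n E j l * fvec n E D k l))"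
      by (subst sum.swap) simp
    also have "\<dots> = - (\<Sum>k<s. (real s - real k) * fvec n E D (Suc k) j)"
      by (simp add: fvec_Suc sum_distrib_left)
    finally show ?thesis .
  qed
  also have "D j = fvec n E D 0 j" using fvec_0 Suc.prems by simp
  finally show ?case
    by (simp add: sum.lessThan_Suc_shift del: sum.lessThan_Suc) (simp add: algebra_simps)
qed

lemma sum_ind_ge: "(\<Sum>k<m. (if N \<le> k then 1 else 0::real)) \<ge> real m - real N"
proof (induction m)
  case 0 then show ?case by simp
next
  case (Suc m)
  have "(\<Sum>k<m. (if N \<le> k then 1 else 0::real)) \<ge> 0" by (rule sum_nonneg) auto
  then show ?case using Suc by (cases "N \<le> m") auto
qed

lemma G_bound: "2 * (\<Sum>k<t. (real t - real k) * (if N \<le> k then 1 else 0)) \<ge> (real t)^2 - (2 * real N - 1) * real t"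
proof (induction t)
  case 0 then show ?case by simp
next
  case (Suc t)
  have eq: "(\<Sum>k<Suc t. (real (Suc t) - real k) * (if N \<le> k then 1 else 0))
     = (\<Sum>k<t. (real t - real k) * (if N \<le> k then 1 else 0)) + (\<Sum>k<Suc t. (if N \<le> k then 1 else 0::real))"
  proof -
    have "(\<Sum>k<t. (real (Suc t) - real k) * (if N \<le> k then 1 else 0))
       = (\<Sum>k<t. (real t - real k) * (if N \<le> k then 1 else 0) + (if N \<le> k then 1 else 0::real))"
      by (rule sum.cong) (auto simp: algebra_simps)
    then show ?thesis by (simp add: sum.distrib)
  qed
  define G where "G = (\<Sum>k<t. (real t - real k) * (if N \<le> k then 1 else 0::real))"
  define H where "H = (\<Sum>k<Suc t. (if N \<le> k then 1 else 0::real))"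
  have h1: "2 * G \<ge> (real t)^2 - (2 * real N - 1) * real t" using Suc G_def by simp
  have "H \<ge> real (Suc t) - real N" unfolding H_def by (rule sum_ind_ge)
  then have h2: "H \<ge> real t + 1 - real N" by simp
  have "2 * (G + H) \<ge> (real t + 1)^2 - (2 * real N - 1) * (real t + 1)"
    using h1 h2 by (simp add: power2_eq_square algebra_simps)
  then show ?case unfolding eq G_def[symmetric] H_def[symmetric] by (simp add: add.commute)
qed

lemma gibbs:
  assumes "finite A" "\<forall>w\<in>A. p w > 0" "\<forall>w\<in>A. q w > 0" "sum p A = 1" "sum q A = 1"
  shows "KL A p q \<ge> 0"
proof -
  have "(\<Sum>w\<in>A. p w - q w) \<le> KL A p q"
    unfolding KL_def
  proof (rule sum_mono)
    fix w assume w: "w \<in> A"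
    have "ln (q w / p w) \<le> q w / p w - 1" using w assms by (intro ln_le_minus_one) auto
    moreover have "ln (p w / q w) = - ln (q w / p w)" using w assms by (simp add: ln_div)
    ultimately have "p w * (1 - q w / p w) \<le> p w * ln (p w / q w)"
      using w assms by (intro mult_left_mono) auto
    moreover have "p w * (1 - q w / p w) = p w - q w"
    proof -
      have "p w > 0" using w assms by auto
      then show ?thesis by (simp add: field_simps)
    qed
    ultimately show "p w - q w \<le> p w * ln (p w / q w)" by simp
  qed
  then show ?thesis using assms by (simp add: sum_subtractf)
qed



abbreviation "Iset n t \<equiv> agents n \<times> {1..t}"

lemma expect_cong:
  "(\<And>\<omega>. \<omega> \<in> PiE (Iset n t) (\<lambda>p. S (fst p)) \<Longrightarrow> X \<omega> = Y \<omega>) \<Longrightarrow>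
   expect_star n S L \<theta>s t X = expect_star n S L \<theta>s t Y"
  unfolding expect_star_def by (rule sum.cong) auto

lemma expect_add: "expect_star n S L \<theta>s t (\<lambda>\<omega>. X \<omega> + Y \<omega>) = expect_star n S L \<theta>s t X + expect_star n S L \<theta>s t Y"
  unfolding expect_star_def by (simp add: distrib_left sum.distrib)

lemma expect_cmult: "expect_star n S L \<theta>s t (\<lambda>\<omega>. c * X \<omega>) = c * expect_star n S L \<theta>s t X"
  unfolding expect_star_def by (simp add: sum_distrib_left mult.left_commute)

lemma expect_sum: "expect_star n S L \<theta>s t (\<lambda>\<omega>. \<Sum>r\<in>R. X r \<omega>) = (\<Sum>r\<in>R. expect_star n S L \<theta>s t (X r))"
  unfolding expect_star_def by (simp add: sum_distrib_left sum.swap[of _ R])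

lemma expect_zero: "expect_star n S L \<theta>s t (\<lambda>\<omega>. 0) = 0"
  unfolding expect_star_def by simp

lemma expect_marg:
  assumes fin_S: "\<forall>j\<in>agents n. finite (S j)"
    and lik_sum: "\<forall>j\<in>agents n. (\<Sum>w\<in>S j. L j w \<theta>s) = 1"
    and p0: "(j, r) \<in> Iset n t"
  shows "expect_star n S L \<theta>s t (\<lambda>\<omega>. g (\<omega> (j, r))) = (\<Sum>w\<in>S j. L j w \<theta>s * g w)"
proof -
  define F where "F p w = (if p = (j, r) then L (fst p) w \<theta>s * g w else L (fst p) w \<theta>s)" for p w
  have finI: "finite (Iset n t)" by simp
  have eq1: "(\<Prod>p\<in>Iset n t. L (fst p) (\<omega> p) \<theta>s) * g (\<omega> (j, r)) = (\<Prod>p\<in>Iset n t. F p (\<omega> p))" for \<omega>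
  proof -
    have "(\<Prod>p\<in>Iset n t. F p (\<omega> p)) = F (j, r) (\<omega> (j, r)) * (\<Prod>p\<in>Iset n t - {(j, r)}. F p (\<omega> p))"
      by (rule prod.remove[OF finI p0])
    also have "(\<Prod>p\<in>Iset n t - {(j, r)}. F p (\<omega> p)) = (\<Prod>p\<in>Iset n t - {(j, r)}. L (fst p) (\<omega> p) \<theta>s)"
      by (rule prod.cong) (auto simp: F_def)
    also have "(\<Prod>p\<in>Iset n t. L (fst p) (\<omega> p) \<theta>s) = L j (\<omega> (j, r)) \<theta>s * (\<Prod>p\<in>Iset n t - {(j, r)}. L (fst p) (\<omega> p) \<theta>s)"
      using prod.remove[OF finI p0, of "\<lambda>p. L (fst p) (\<omega> p) \<theta>s"] by simp
    ultimately show ?thesis by (simp add: F_def)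
  qed
  have "expect_star n S L \<theta>s t (\<lambda>\<omega>. g (\<omega> (j, r))) = (\<Sum>\<omega>\<in>PiE (Iset n t) (\<lambda>p. S (fst p)). \<Prod>p\<in>Iset n t. F p (\<omega> p))"
    unfolding expect_star_def using eq1 by simp
  also have "\<dots> = (\<Prod>p\<in>Iset n t. \<Sum>w\<in>S (fst p). F p w)"
    by (rule prod_sum_PiE[symmetric]) (use fin_S in auto)
  also have "\<dots> = (\<Sum>w\<in>S j. F (j, r) w) * (\<Prod>p\<in>Iset n t - {(j, r)}. \<Sum>w\<in>S (fst p). F p w)"
    using prod.remove[OF finI p0, of "\<lambda>p. \<Sum>w\<in>S (fst p). F p w"] by simp
  also have "(\<Prod>p\<in>Iset n t - {(j, r)}. \<Sum>w\<in>S (fst p). F p w) = 1"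
    by (rule prod.neutral) (use lik_sum in \<open>auto simp: F_def\<close>)
  finally show ?thesis by (simp add: F_def)
qed

lemma omega_in: "\<omega> \<in> PiE (Iset n t) (\<lambda>p. S (fst p)) \<Longrightarrow> j \<in> agents n \<Longrightarrow> r \<in> {1..t} \<Longrightarrow> \<omega> (j, r) \<in> S j"
  by (drule PiE_mem[of _ _ _ "(j, r)"]) auto

lemma cum_lik_pos:
  assumes lik_pos: "\<forall>j\<in>agents n. \<forall>w\<in>S j. \<forall>\<eta>\<in>\<Theta>. L j w \<eta> > 0"
    and om: "\<omega> \<in> PiE (Iset n t) (\<lambda>p. S (fst p))" and "s \<le> t" "j \<in> agents n" "\<eta> \<in> \<Theta>"
  shows "cum_lik L \<omega> s j \<eta> > 0"
  unfolding cum_lik_def using assms omega_in[OF om] by (intro prod_pos) auto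

lemma belief_pos:
  assumes fin_Theta: "finite \<Theta>" and ne: "\<Theta> \<noteq> {}"
    and lik_pos: "\<forall>j\<in>agents n. \<forall>w\<in>S j. \<forall>\<eta>\<in>\<Theta>. L j w \<eta> > 0"
    and om: "\<omega> \<in> PiE (Iset n t) (\<lambda>p. S (fst p))"
  shows "s \<le> t \<Longrightarrow> j \<in> agents n \<Longrightarrow> \<eta> \<in> \<Theta> \<Longrightarrow> bfl_belief n E \<Theta> L \<omega> s j \<eta> > 0"
proof (induction s arbitrary: j \<eta>)
  case 0 then show ?case using fin_Theta ne by (simp add: card_gt_0_iff)
next
  case (Suc s)
  define b where "b = bfl_belief n E \<Theta> L \<omega> s"
  define u where "u = (\<lambda>i \<theta>. cum_lik L \<omega> (Suc s) i \<theta> *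
                 (\<Prod>j\<in>insert i (incoming n E i). b j \<theta> powr (1 / (real (card (incoming n E i)) + 1))))"
  have upos: "u j \<eta>' > 0" if "\<eta>' \<in> \<Theta>" for \<eta>'
  proof -
    have "cum_lik L \<omega> (Suc s) j \<eta>' > 0" using cum_lik_pos[OF lik_pos om] Suc.prems that by auto
    moreover have "b k \<eta>' > 0" if "k \<in> insert j (incoming n E j)" for k
      using Suc.IH[of k \<eta>'] Suc.prems that \<open>\<eta>' \<in> \<Theta>\<close> incoming_sub[of n E j] unfolding b_def by auto
    then have "\<forall>k\<in>insert j (incoming n E j). b k \<eta>' powr (1 / (real (card (incoming n E j)) + 1)) > 0"
      by (metis less_irrefl powr_gt_zero)
    ultimately show ?thesis unfolding u_def by (intro mult_pos_pos prod_pos) auto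
  qed
  have "(\<Sum>\<theta>'\<in>\<Theta>. u j \<theta>') > 0" using fin_Theta ne upos by (intro sum_pos) auto
  moreover have "bfl_belief n E \<Theta> L \<omega> (Suc s) j \<eta> = u j \<eta> / (\<Sum>\<theta>'\<in>\<Theta>. u j \<theta>')"
    unfolding b_def u_def by (simp add: Let_def)
  ultimately show ?case using upos Suc.prems by simp
qed



lemma sum_amat:
  assumes "j \<in> agents n"
  shows "(\<Sum>l\<in>agents n. amat n E j l * X l)
       = (\<Sum>k\<in>insert j (incoming n E j). 1 / (real (card (incoming n E j)) + 1) * X k)"
proof -
  have sub: "insert j (incoming n E j) \<subseteq> agents n" using assms incoming_sub by auto
  have "(\<Sum>l\<in>agents n. amat n E j l * X l)
      = (\<Sum>l\<in>agents n. if l \<in> insert j (incoming n E j) then 1 / (real (card (incoming n E j)) + 1) * X l else 0)"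
    unfolding amat_def by (rule sum.cong) auto
  also have "\<dots> = (\<Sum>l\<in>agents n \<inter> insert j (incoming n E j). 1 / (real (card (incoming n E j)) + 1) * X l)"
    by (rule sum.inter_restrict[symmetric]) simp
  also have "agents n \<inter> insert j (incoming n E j) = insert j (incoming n E j)" using sub by auto
  finally show ?thesis .
qed

lemma psi_rec:
  assumes fin_Theta: "finite \<Theta>" and ne: "\<Theta> \<noteq> {}"
    and lik_pos: "\<forall>j\<in>agents n. \<forall>w\<in>S j. \<forall>\<eta>\<in>\<Theta>. L j w \<eta> > 0"
    and om: "\<omega> \<in> PiE (Iset n t) (\<lambda>p. S (fst p))"
    and th: "\<theta> \<in> \<Theta>" and ths: "\<theta>s \<in> \<Theta>" and st: "Suc s \<le> t" and j: "j \<in> agents n"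
  shows "ln (bfl_belief n E \<Theta> L \<omega> (Suc s) j \<theta> / bfl_belief n E \<Theta> L \<omega> (Suc s) j \<theta>s)
       = (\<Sum>r\<in>{1..Suc s}. ln (L j (\<omega> (j, r)) \<theta> / L j (\<omega> (j, r)) \<theta>s))
         + (\<Sum>l\<in>agents n. amat n E j l * ln (bfl_belief n E \<Theta> L \<omega> s l \<theta> / bfl_belief n E \<Theta> L \<omega> s l \<theta>s))"
proof -
  define b where "b = bfl_belief n E \<Theta> L \<omega> s"
  define w where "w = 1 / (real (card (incoming n E j)) + 1)"
  define K where "K = insert j (incoming n E j)"
  define u where "u = (\<lambda>\<theta>. cum_lik L \<omega> (Suc s) j \<theta> * (\<Prod>k\<in>K. b k \<theta> powr w))"
  have K: "K \<subseteq> agents n" "finite K" using j incoming_sub unfolding K_def by auto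
  have bpos: "b k \<eta> > 0" if "k \<in> K" "\<eta> \<in> \<Theta>" for k \<eta>
    unfolding b_def using belief_pos[OF fin_Theta ne lik_pos om] st K that by auto
  have cpos: "cum_lik L \<omega> (Suc s) j \<eta> > 0" if "\<eta> \<in> \<Theta>" for \<eta>
    using cum_lik_pos[OF lik_pos om] st j that by auto
  have Lpos: "L j (\<omega> (j, r)) \<eta> > 0" if "r \<in> {1..Suc s}" "\<eta> \<in> \<Theta>" for r \<eta>
    using lik_pos omega_in[OF om j, of r] st that j by auto
  have ppos: "(\<Prod>k\<in>K. b k \<eta> powr w) > 0" if "\<eta> \<in> \<Theta>" for \<eta>
    using bpos that K by (intro prod_pos) (metis less_irrefl powr_gt_zero)
  have upos: "u \<eta> > 0" if "\<eta> \<in> \<Theta>" for \<eta>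
    unfolding u_def using cpos ppos that by auto
  define Z where "Z = (\<Sum>\<theta>'\<in>\<Theta>. u \<theta>')"
  have Zpos: "Z > 0" unfolding Z_def using fin_Theta ne upos by (intro sum_pos) auto
  have bS: "bfl_belief n E \<Theta> L \<omega> (Suc s) j \<eta> = u \<eta> / Z" for \<eta>
    unfolding b_def u_def Z_def w_def K_def by (simp add: Let_def)
  have lnu: "ln (u \<eta>) = (\<Sum>r\<in>{1..Suc s}. ln (L j (\<omega> (j, r)) \<eta>)) + (\<Sum>k\<in>K. w * ln (b k \<eta>))"
    if "\<eta> \<in> \<Theta>" for \<eta>
  proof -
    have "ln (u \<eta>) = ln (cum_lik L \<omega> (Suc s) j \<eta>) + ln (\<Prod>k\<in>K. b k \<eta> powr w)"
      unfolding u_def using cpos ppos that by (simp add: ln_mult_pos)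
    also have "ln (cum_lik L \<omega> (Suc s) j \<eta>) = (\<Sum>r\<in>{1..Suc s}. ln (L j (\<omega> (j, r)) \<eta>))"
      unfolding cum_lik_def using Lpos that by (intro ln_prod) (auto simp del: atLeastAtMost_iff, fastforce)
    also have "ln (\<Prod>k\<in>K. b k \<eta> powr w) = (\<Sum>k\<in>K. ln (b k \<eta> powr w))"
      using bpos that K by (intro ln_prod) (auto, metis less_irrefl powr_gt_zero)
    finally show ?thesis by simp
  qed
  have "bfl_belief n E \<Theta> L \<omega> (Suc s) j \<theta> / bfl_belief n E \<Theta> L \<omega> (Suc s) j \<theta>s = u \<theta> / u \<theta>s"
    unfolding bS using Zpos by simp
  then have "ln (bfl_belief n E \<Theta> L \<omega> (Suc s) j \<theta> / bfl_belief n E \<Theta> L \<omega> (Suc s) j \<theta>s)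
     = ln (u \<theta> / u \<theta>s)" by (simp only:)
  also have "\<dots> = ln (u \<theta>) - ln (u \<theta>s)"
    using upos[OF th] upos[OF ths] by (simp add: ln_div)
  also have "\<dots> = (\<Sum>r\<in>{1..Suc s}. ln (L j (\<omega> (j, r)) \<theta>) - ln (L j (\<omega> (j, r)) \<theta>s))
      + (\<Sum>k\<in>K. w * (ln (b k \<theta>) - ln (b k \<theta>s)))"
    using lnu th ths by (simp add: sum_subtractf algebra_simps sum.distrib)
  also have "(\<Sum>r\<in>{1..Suc s}. ln (L j (\<omega> (j, r)) \<theta>) - ln (L j (\<omega> (j, r)) \<theta>s))
      = (\<Sum>r\<in>{1..Suc s}. ln (L j (\<omega> (j, r)) \<theta> / L j (\<omega> (j, r)) \<theta>s))"
  proof (rule sum.cong)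
    fix r assume rr: "r \<in> {1..Suc s}"
    show "ln (L j (\<omega> (j, r)) \<theta>) - ln (L j (\<omega> (j, r)) \<theta>s) = ln (L j (\<omega> (j, r)) \<theta> / L j (\<omega> (j, r)) \<theta>s)"
      using Lpos[OF rr th] Lpos[OF rr ths] by (simp add: ln_div)
  qed simp
  also have "(\<Sum>k\<in>K. w * (ln (b k \<theta>) - ln (b k \<theta>s))) = (\<Sum>k\<in>K. w * ln (b k \<theta> / b k \<theta>s))"
  proof (rule sum.cong)
    fix k assume kk: "k \<in> K"
    show "w * (ln (b k \<theta>) - ln (b k \<theta>s)) = w * ln (b k \<theta> / b k \<theta>s)"
      using bpos[OF kk th] bpos[OF kk ths] by (simp add: ln_div)
  qed simp
  also have "\<dots> = (\<Sum>l\<in>agents n. amat n E j l * ln (b l \<theta> / b l \<theta>s))"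
    unfolding sum_amat[OF j] K_def w_def ..
  finally show ?thesis unfolding b_def .
qed



theorem lemma4:
  fixes n :: nat and E :: "(nat \<times> nat) set" and \<Theta> :: "'h set"
    and S :: "nat \<Rightarrow> 's set" and L :: "nat \<Rightarrow> 's \<Rightarrow> 'h \<Rightarrow> real"
    and \<theta> \<theta>s :: 'h and i t :: nat
  assumes n2: "n \<ge> 2"
    and E_sub: "E \<subseteq> agents n \<times> agents n"
    and sc: "strongly_connected n E"
    and fin_Theta: "finite \<Theta>"
    and fin_S: "\<forall>j\<in>agents n. finite (S j)"
    and lik_pos: "\<forall>j\<in>agents n. \<forall>w\<in>S j. \<forall>\<eta>\<in>\<Theta>. L j w \<eta> > 0"
    and lik_sum: "\<forall>j\<in>agents n. \<forall>\<eta>\<in>\<Theta>. (\<Sum>w\<in>S j. L j w \<eta>) = 1"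
    and th: "\<theta> \<in> \<Theta>" and ths: "\<theta>s \<in> \<Theta>" and neq: "\<theta> \<noteq> \<theta>s"
    and i: "i \<in> agents n" and t: "t \<ge> 1"
  shows "expect_star n S L \<theta>s t
           (\<lambda>\<omega>. ln (bfl_belief n E \<Theta> L \<omega> t i \<theta> / bfl_belief n E \<Theta> L \<omega> t i \<theta>s))
         \<le> (let lam = (1 - (1 / real n) ^ n) powr (1 / real n)
            in real n * C0 n S L \<Theta> / ((1 - 1 / real n ^ n) * (1 - lam)) * real t
               - C1 n S L \<Theta> / (2 * real n ^ n) * (real t)\<^sup>2)"
proof -
  have ne: "\<Theta> \<noteq> {}" using th by auto
  define D where "D j = KL (S j) (\<lambda>w. L j w \<theta>s) (\<lambda>w. L j w \<theta>)" for j
  define e where "e s j = expect_star n S L \<theta>s t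
           (\<lambda>\<omega>. ln (bfl_belief n E \<Theta> L \<omega> s j \<theta> / bfl_belief n E \<Theta> L \<omega> s j \<theta>s))" for s j
  have e0: "e 0 j = 0" for j
  proof -
    have "e 0 j = expect_star n S L \<theta>s t (\<lambda>\<omega>. 0)"
      unfolding e_def by (rule expect_cong) simp
    then show ?thesis by (simp add: expect_zero)
  qed
  have marg: "expect_star n S L \<theta>s t (\<lambda>\<omega>. ln (L j (\<omega> (j, r)) \<theta> / L j (\<omega> (j, r)) \<theta>s)) = - D j"
    if j: "j \<in> agents n" and r: "r \<in> {1..t}" for j r
  proof -
    have "expect_star n S L \<theta>s t (\<lambda>\<omega>. ln (L j (\<omega> (j, r)) \<theta> / L j (\<omega> (j, r)) \<theta>s))
        = (\<Sum>w\<in>S j. L j w \<theta>s * ln (L j w \<theta> / L j w \<theta>s))"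
      by (rule expect_marg[where g = "\<lambda>w. ln (L j w \<theta> / L j w \<theta>s)"])
         (use fin_S lik_sum ths j r in auto)
    also have "\<dots> = (\<Sum>w\<in>S j. - (L j w \<theta>s * ln (L j w \<theta>s / L j w \<theta>)))"
    proof (rule sum.cong)
      fix w assume w: "w \<in> S j"
      have "L j w \<theta> > 0" "L j w \<theta>s > 0" using lik_pos j w th ths by auto
      then show "L j w \<theta>s * ln (L j w \<theta> / L j w \<theta>s) = - (L j w \<theta>s * ln (L j w \<theta>s / L j w \<theta>))"
        by (simp add: ln_div algebra_simps)
    qed simp
    finally show ?thesis unfolding D_def KL_def by (simp add: sum_negf)
  qed
  have eS: "e (Suc s) j = - real (Suc s) * D j + (\<Sum>l\<in>agents n. amat n E j l * e s l)"
    if st: "Suc s \<le> t" and j: "j \<in> agents n" for s j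
  proof -
    have "e (Suc s) j = expect_star n S L \<theta>s t (\<lambda>\<omega>.
          (\<Sum>r\<in>{1..Suc s}. ln (L j (\<omega> (j, r)) \<theta> / L j (\<omega> (j, r)) \<theta>s))
         + (\<Sum>l\<in>agents n. amat n E j l * ln (bfl_belief n E \<Theta> L \<omega> s l \<theta> / bfl_belief n E \<Theta> L \<omega> s l \<theta>s)))"
      unfolding e_def
      by (rule expect_cong, rule psi_rec[OF fin_Theta ne lik_pos _ th ths st j])
    also have "\<dots> = (\<Sum>r\<in>{1..Suc s}. - D j) + (\<Sum>l\<in>agents n. amat n E j l * e s l)"
      unfolding expect_add expect_sum expect_cmult e_def
      using marg[OF j] st by (simp)
    finally show ?thesis by (simp add: algebra_simps)
  qed
  have cf: "e t i = - (\<Sum>k<t. (real t - real k) * fvec n E D k i)"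
    by (rule closed_form[where e = e, OF e0 eS _ i]) auto
  have Dnn: "KL (S j) (\<lambda>w. L j w \<eta>') (\<lambda>w. L j w \<eta>) \<ge> 0"
    if "j \<in> agents n" "\<eta> \<in> \<Theta>" "\<eta>' \<in> \<Theta>" for j \<eta> \<eta>'
    by (rule gibbs) (use fin_S lik_pos lik_sum that in auto)
  have D0: "D j \<ge> 0" if "j \<in> agents n" for j unfolding D_def using Dnn that th ths by auto
  define A0 where "A0 = {ln (L i w \<theta>1 / L i w \<theta>2) | i w \<theta>1 \<theta>2.
       i \<in> agents n \<and> \<theta>1 \<in> \<Theta> \<and> \<theta>2 \<in> \<Theta> \<and> \<theta>1 \<noteq> \<theta>2 \<and> w \<in> S i}"
  have finA0: "finite A0"
  proof -
    have "A0 \<subseteq> (\<lambda>(i, w, \<theta>1, \<theta>2). ln (L i w \<theta>1 / L i w \<theta>2)) ` (SIGMA i:agents n. S i \<times> \<Theta> \<times> \<Theta>)"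
      unfolding A0_def by force
    moreover have "finite (SIGMA i:agents n. S i \<times> \<Theta> \<times> \<Theta>)"
      using fin_S fin_Theta by (intro finite_SigmaI) auto
    ultimately show ?thesis by (meson finite_imageI finite_subset)
  qed
  have C0_def': "C0 n S L \<Theta> = - Min A0" unfolding C0_def A0_def ..
  have DC0: "D j \<le> C0 n S L \<Theta>" if j: "j \<in> agents n" for j
  proof -
    have "D j \<le> (\<Sum>w\<in>S j. L j w \<theta>s * C0 n S L \<Theta>)"
      unfolding D_def KL_def
    proof (rule sum_mono)
      fix w assume w: "w \<in> S j"
      have pos: "L j w \<theta> > 0" "L j w \<theta>s > 0" using lik_pos j w th ths by auto
      have "ln (L j w \<theta> / L j w \<theta>s) \<in> A0" unfolding A0_def using j w th ths neq by blast
      then have "Min A0 \<le> ln (L j w \<theta> / L j w \<theta>s)" using finA0 by (rule Min_le[rotated])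
      then have "ln (L j w \<theta>s / L j w \<theta>) \<le> C0 n S L \<Theta>"
        unfolding C0_def' using pos by (simp add: ln_div)
      then show "L j w \<theta>s * ln (L j w \<theta>s / L j w \<theta>) \<le> L j w \<theta>s * C0 n S L \<Theta>"
        using pos by (intro mult_left_mono) auto
    qed
    also have "\<dots> = C0 n S L \<Theta>" using lik_sum j ths by (simp add: sum_distrib_right[symmetric])
    finally show ?thesis .
  qed
  have C0nn: "C0 n S L \<Theta> \<ge> 0" using D0[OF i] DC0[OF i] by linarith
  define A1 where "A1 = {(\<Sum>i\<in>agents n. KL (S i) (\<lambda>w. L i w \<theta>') (\<lambda>w. L i w \<theta>)) | \<theta> \<theta>'.
       \<theta> \<in> \<Theta> \<and> \<theta>' \<in> \<Theta> \<and> \<theta> \<noteq> \<theta>'}"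
  have finA1: "finite A1"
  proof -
    have "A1 \<subseteq> (\<lambda>(\<theta>, \<theta>'). (\<Sum>i\<in>agents n. KL (S i) (\<lambda>w. L i w \<theta>') (\<lambda>w. L i w \<theta>))) ` (\<Theta> \<times> \<Theta>)"
      unfolding A1_def by force
    then show ?thesis using fin_Theta by (meson finite_SigmaI finite_imageI finite_subset)
  qed
  have C1_def': "C1 n S L \<Theta> = Min A1" unfolding C1_def A1_def ..
  have memA1: "(\<Sum>j\<in>agents n. D j) \<in> A1" unfolding A1_def D_def using th ths neq by blast
  have C1D: "C1 n S L \<Theta> \<le> (\<Sum>j\<in>agents n. D j)"
    unfolding C1_def' using finA1 memA1 by (rule Min_le)
  have C1nn: "C1 n S L \<Theta> \<ge> 0"
  proof -
    have "Min A1 \<in> A1" using finA1 memA1 by (intro Min_in) auto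
    then obtain \<eta> \<eta>' where "\<eta> \<in> \<Theta>" "\<eta>' \<in> \<Theta>"
      "Min A1 = (\<Sum>i\<in>agents n. KL (S i) (\<lambda>w. L i w \<eta>') (\<lambda>w. L i w \<eta>))"
      unfolding A1_def by blast
    then show ?thesis unfolding C1_def' using Dnn by (auto intro: sum_nonneg)
  qed
  have C1n: "C1 n S L \<Theta> \<le> real n * C0 n S L \<Theta>"
  proof -
    have "(\<Sum>j\<in>agents n. D j) \<le> (\<Sum>j\<in>agents n. C0 n S L \<Theta>)" using DC0 by (intro sum_mono) auto
    then show ?thesis using C1D by simp
  qed
  define c :: real where "c = (1 / real n) ^ n"
  have n1: "n \<ge> 1" using n2 by simp
  have Pn: "Pm n E n l j \<ge> c" if l: "l \<in> agents n" and j: "j \<in> agents n" for l j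
  proof -
    have "(j, l) \<in> E\<^sup>*" using sc l j unfolding strongly_connected_def by auto
    then obtain m where "(j, l) \<in> E ^^ m" using rtrancl_power by blast
    then obtain m' where "m' \<le> card (agents n)" "(j, l) \<in> E ^^ m'"
      using short_path[OF fin_agents E_sub] by blast
    then show ?thesis unfolding c_def using Pm_walk[OF n1 E_sub l j] by simp
  qed
  have fnn: "fvec n E D k i \<ge> 0" for k
    unfolding fvec_def using D0 by (intro sum_nonneg mult_nonneg_nonneg Pm_nonneg) auto
  have fge: "fvec n E D k i \<ge> c * C1 n S L \<Theta>" if "n \<le> k" for k
  proof -
    have P: "Pm n E k i j \<ge> c" if j: "j \<in> agents n" for j
      using Pm_shift[where N=n and c=c and j=j and i=i and k="k - n" and E=E and n=n] Pn j i \<open>n \<le> k\<close> by simp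
    have "c * C1 n S L \<Theta> \<le> c * (\<Sum>j\<in>agents n. D j)"
      using C1D by (intro mult_left_mono) (auto simp: c_def)
    also have "\<dots> = (\<Sum>j\<in>agents n. c * D j)" by (simp add: sum_distrib_left)
    also have "\<dots> \<le> fvec n E D k i" unfolding fvec_def
      using P D0 by (intro sum_mono mult_right_mono) auto
    finally show ?thesis .
  qed
  have sum_ge: "(\<Sum>k<t. (real t - real k) * fvec n E D k i)
      \<ge> c * C1 n S L \<Theta> * (\<Sum>k<t. (real t - real k) * (if n \<le> k then 1 else 0))"
  proof -
    have "c * C1 n S L \<Theta> * (\<Sum>k<t. (real t - real k) * (if n \<le> k then 1 else 0))
       = (\<Sum>k<t. (real t - real k) * (if n \<le> k then c * C1 n S L \<Theta> else 0))"
      by (simp add: sum_distrib_left if_distrib mult.commute mult.left_commute cong: if_cong)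
    also have "\<dots> \<le> (\<Sum>k<t. (real t - real k) * fvec n E D k i)"
      using fnn fge by (intro sum_mono mult_left_mono) auto
    finally show ?thesis .
  qed
  have cpos: "c > 0" unfolding c_def using n1 by simp
  have cle: "c \<le> 1 / real n"
  proof -
    have "(1 / real n) ^ n \<le> (1 / real n) ^ 1"
      using n1 by (intro power_decreasing) auto
    then show ?thesis unfolding c_def by simp
  qed
  have cn: "c * real n \<le> 1" using cle n1 by (simp add: field_simps)
  have "1 / real n < 1" using n2 by simp
  then have c1: "c < 1" using cle by linarith
  define lam where "lam = (1 - c) powr (1 / real n)"
  have lam0: "lam > 0" unfolding lam_def using c1 by simp
  have lam1: "lam < 1"
  proof -
    have "(1 - c) powr (1 / real n) < 1 powr (1 / real n)"
      using cpos c1 n1 by (intro powr_less_mono2) auto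
    then show ?thesis unfolding lam_def by simp
  qed
  define X where "X = (1 - c) * (1 - lam)"
  have X0: "X > 0" unfolding X_def using c1 lam1 by simp
  have X1: "X \<le> 1" unfolding X_def using cpos c1 lam0 lam1
    by (intro mult_le_one) auto
  have G: "2 * (\<Sum>k<t. (real t - real k) * (if n \<le> k then 1 else 0)) \<ge> (real t)^2 - (2 * real n - 1) * real t"
    by (rule G_bound)
  define C0' where "C0' = C0 n S L \<Theta>"
  define C1' where "C1' = C1 n S L \<Theta>"
  define GG where "GG = (\<Sum>k<t. (real t - real k) * (if n \<le> k then 1 else 0))"
  have eb: "e t i \<le> - (c * C1' * GG)" using cf sum_ge unfolding C1'_def GG_def by simp
  have cC1: "c * C1' \<ge> 0" using cpos C1nn unfolding C1'_def by simp
  have step1: "c * C1' * (2 * GG) \<ge> c * C1' * ((real t)^2 - (2 * real n - 1) * real t)"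
    using G cC1 unfolding GG_def by (intro mult_left_mono) auto
  have step2: "c * C1' * (2 * real n - 1) \<le> 2 * real n * C0'"
  proof -
    have "c * C1' * (2 * real n - 1) \<le> c * (real n * C0') * (2 * real n - 1)"
      using C1n cpos n1 unfolding C1'_def C0'_def by (intro mult_right_mono mult_left_mono) auto
    also have "\<dots> = (c * real n) * ((2 * real n - 1) * C0')" by simp
    also have "\<dots> \<le> 1 * ((2 * real n - 1) * C0')"
      using cn C0nn n1 unfolding C0'_def by (intro mult_right_mono) auto
    also have "\<dots> \<le> 2 * real n * C0'" using C0nn unfolding C0'_def by (simp add: algebra_simps)
    finally show ?thesis .
  qed
  have step3: "real n * C0' * real t \<le> real n * C0' / X * real t"
  proof -
    have "real n * C0' \<le> real n * C0' / X"
      using X0 X1 C0nn unfolding C0'_def by (simp add: le_divide_eq mult_le_cancel_left1 mult_right_le_one_le)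
    then show ?thesis by (intro mult_right_mono) auto
  qed
  have cc: "1 / real n ^ n = c" unfolding c_def by (simp add: power_one_over)
  have "e t i \<le> real n * C0' / X * real t - c * C1' / 2 * (real t)\<^sup>2"
  proof -
    have "c * C1' * (2 * real n - 1) * real t \<le> 2 * real n * C0' * real t"
      using step2 by (intro mult_right_mono) auto
    then show ?thesis using eb step1 step3 by (simp add: algebra_simps)
  qed
  moreover have "C1 n S L \<Theta> / (2 * real n ^ n) = c * C1' / 2"
    unfolding C1'_def cc[symmetric] by simp
  moreover have "(1 / real n) ^ n = c" by (simp add: c_def)
  ultimately show ?thesis
    unfolding Let_def e_def X_def lam_def C0'_def by (simp only: cc)
qed

end
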